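(* Let $I\subset S$ be a nonzero proper graded ideal. Then $$\lim_{k\to\infty}\frac{\mathrm{v}(I^k)}{k}=\alpha(I).$$
   Context: $S=K[x_1,\dots,x_n]$ is a standard graded polynomial ring over a field $K$, $S_d$ its degree-$d$ component. For a graded ideal $I\subset S$, the v-number of $I$ is $\mathrm{v}(I)=\min\{d:\exists f\in S_d\text{ with }(I:f)\in\operatorname{Ass}(I)\}$. For a nonzero graded module $M=\bigoplus_d M_d$, $\alpha(M)=\min\{d:M_d\neq0\}$ is its initial degree; $\alpha(I)$ is the least degree of a nonzero element of $I$. *)

theory Defs
  imports "HOL-Analysis.Analysis" "HOL-Library.Poly_Mapping"
begin

text \<open>The polynomial ring S = K[x_v : v in 'v] over a field K, with a finite type 'v of
  variables (so n = CARD('v)).\<close>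

type_synonym ('v, 'k) mpoly = "('v \<Rightarrow>\<^sub>0 nat) \<Rightarrow>\<^sub>0 'k"

definition mdeg :: "('v::finite \<Rightarrow>\<^sub>0 nat) \<Rightarrow> nat" where
  "mdeg m = (\<Sum>v\<in>UNIV. Poly_Mapping.lookup m v)"

text \<open>f lies in S_d (the zero polynomial lies in every S_d).\<close>
definition homog :: "nat \<Rightarrow> ('v::finite, 'k::field) mpoly \<Rightarrow> bool" where
  "homog d f \<longleftrightarrow> (\<forall>m\<in>Poly_Mapping.keys f. mdeg m = d)"

definition is_ideal :: "('v::finite, 'k::field) mpoly set \<Rightarrow> bool" where
  "is_ideal I \<longleftrightarrow> 0 \<in> I \<and> (\<forall>f\<in>I. \<forall>g\<in>I. f + g \<in> I) \<and> (\<forall>f\<in>I. \<forall>h. h * f \<in> I)"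

definition ideal_gen :: "('v::finite, 'k::field) mpoly set \<Rightarrow> ('v, 'k) mpoly set" where
  "ideal_gen G = \<Inter>{J. is_ideal J \<and> G \<subseteq> J}"

definition graded_ideal :: "('v::finite, 'k::field) mpoly set \<Rightarrow> bool" where
  "graded_ideal I \<longleftrightarrow> is_ideal I \<and> I = ideal_gen {f\<in>I. \<exists>d. homog d f}"

fun ideal_pow :: "('v::finite, 'k::field) mpoly set \<Rightarrow> nat \<Rightarrow> ('v, 'k) mpoly set" where
  "ideal_pow I 0 = UNIV"
| "ideal_pow I (Suc k) = ideal_gen {f * g | f g. f \<in> I \<and> g \<in> ideal_pow I k}"

definition colon :: "('v::finite, 'k::field) mpoly set \<Rightarrow> ('v, 'k) mpoly \<Rightarrow> ('v, 'k) mpoly set" where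
  "colon I f = {g. g * f \<in> I}"

definition prime_ideal :: "('v::finite, 'k::field) mpoly set \<Rightarrow> bool" where
  "prime_ideal P \<longleftrightarrow> is_ideal P \<and> P \<noteq> UNIV \<and> (\<forall>a b. a * b \<in> P \<longrightarrow> a \<in> P \<or> b \<in> P)"

definition Ass :: "('v::finite, 'k::field) mpoly set \<Rightarrow> ('v, 'k) mpoly set set" where
  "Ass I = {P. prime_ideal P \<and> (\<exists>f. P = colon I f)}"

definition v_number :: "('v::finite, 'k::field) mpoly set \<Rightarrow> nat" where
  "v_number I = (LEAST d. \<exists>f. homog d f \<and> colon I f \<in> Ass I)"

definition init_deg :: "('v::finite, 'k::field) mpoly set \<Rightarrow> nat" where
  "init_deg I = (LEAST d. \<exists>f\<in>I. f \<noteq> 0 \<and> homog d f)"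

end

theory Submission
  imports Defs "HOL-Library.List_Lexorder"
begin


abbreviation "ks \<equiv> Poly_Mapping.keys"
abbreviation "lk \<equiv> Poly_Mapping.lookup"

lemma ideal_gen_ideal: "is_ideal (ideal_gen G)"
  unfolding ideal_gen_def is_ideal_def by auto

lemma ideal_gen_sub: "G \<subseteq> ideal_gen G"
  unfolding ideal_gen_def by auto

lemma ideal_gen_least: "is_ideal J \<Longrightarrow> G \<subseteq> J \<Longrightarrow> ideal_gen G \<subseteq> J"
  unfolding ideal_gen_def by auto

lemma ideal_0: "is_ideal J \<Longrightarrow> 0 \<in> J" unfolding is_ideal_def by auto
lemma ideal_add: "is_ideal J \<Longrightarrow> f \<in> J \<Longrightarrow> g \<in> J \<Longrightarrow> f + g \<in> J" unfolding is_ideal_def by auto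
lemma ideal_multL: "is_ideal J \<Longrightarrow> f \<in> J \<Longrightarrow> h * f \<in> J" unfolding is_ideal_def by auto
lemma ideal_multR: "is_ideal J \<Longrightarrow> f \<in> J \<Longrightarrow> f * h \<in> J"
  using ideal_multL[of J f h] by (simp add: mult.commute)
lemma ideal_uminus: "is_ideal J \<Longrightarrow> f \<in> J \<Longrightarrow> - f \<in> J"
  using ideal_multL[of J f "-1"] by simp
lemma ideal_diff: "is_ideal J \<Longrightarrow> f \<in> J \<Longrightarrow> g \<in> J \<Longrightarrow> f - g \<in> J"
  using ideal_add[of J f "-g"] ideal_uminus[of J g] by simp
lemma ideal_sum: "is_ideal J \<Longrightarrow> (\<And>i. i \<in> A \<Longrightarrow> f i \<in> J) \<Longrightarrow> sum f A \<in> J"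
  by (induction A rule: infinite_finite_induct) (auto simp: ideal_0 ideal_add)

lemma ideal_UNIV: "is_ideal UNIV" unfolding is_ideal_def by auto

lemma ideal_pow_ideal: "is_ideal (ideal_pow I k)"
  by (cases k) (auto simp: ideal_UNIV ideal_gen_ideal)

lemma ideal_pow_mult: "f \<in> I \<Longrightarrow> g \<in> ideal_pow I k \<Longrightarrow> f * g \<in> ideal_pow I (Suc k)"
  using ideal_gen_sub by fastforce

lemma ideal_pow_power: "f \<in> I \<Longrightarrow> f ^ k \<in> ideal_pow I k"
proof (induction k)
  case (Suc k) thus ?case using ideal_pow_mult[of f I "f^k" k] by simp
qed simp

lemma colon_ideal: "is_ideal J \<Longrightarrow> is_ideal (colon J f)"
  unfolding colon_def is_ideal_def by (auto simp: distrib_right mult.assoc)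

lemma colon_colon: "colon (colon J a) b = colon J (a * b)"
  unfolding colon_def by (auto simp: ac_simps)

lemma colon_mono_ideal: "is_ideal J \<Longrightarrow> J \<subseteq> colon J f"
  unfolding colon_def using ideal_multR by blast

lemma mdeg_add: "mdeg (a + b) = mdeg a + mdeg b"
  unfolding mdeg_def by (simp add: lookup_add sum.distrib)

lemma mdeg_0 [simp]: "mdeg 0 = 0"
  unfolding mdeg_def by simp

lemma homog_mult: "homog d f \<Longrightarrow> homog e g \<Longrightarrow> homog (d + e) (f * g)"
  unfolding homog_def using keys_mult[of f g] by (force simp: mdeg_add)

lemma homog_one: "homog 0 (1::('v::finite,'k::field) mpoly)"
  unfolding homog_def by simp

lemma homog_pow: "homog d f \<Longrightarrow> homog (k * d) (f ^ k)"
  by (induction k) (auto simp: homog_one dest: homog_mult)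

definition lowdeg :: "nat \<Rightarrow> ('v::finite, 'k::field) mpoly \<Rightarrow> bool" where
  "lowdeg c h \<longleftrightarrow> (\<forall>m\<in>Poly_Mapping.keys h. c \<le> mdeg m)"

lemma lowdeg_ideal: "is_ideal {h. lowdeg c h}"
  unfolding is_ideal_def lowdeg_def
proof (intro conjI ballI allI; clarsimp)
  fix f g m assume f: "\<forall>m\<in>ks f. c \<le> mdeg m" and g: "\<forall>m\<in>ks g. c \<le> mdeg m"
    and m: "m \<in> ks (f + g)"
  then show "c \<le> mdeg m" using keys_add[of f g] by auto
next
  fix f h m assume f: "\<forall>m\<in>ks f. c \<le> mdeg m" and m: "m \<in> ks (h * f)"
  then show "c \<le> mdeg m" using keys_mult[of h f] by (force simp: mdeg_add)
qed



section \<open>Monomial order\<close>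

definition vlist :: "'v::finite list" where "vlist = (SOME xs. set xs = UNIV)"

lemma set_vlist: "set (vlist :: 'v::finite list) = UNIV"
  unfolding vlist_def by (rule someI_ex) (simp add: finite_list)

definition phi :: "('v::finite \<Rightarrow>\<^sub>0 nat) \<Rightarrow> nat list" where
  "phi m = map (lk m) vlist"

lemma phi_inj: "inj (phi :: ('v::finite \<Rightarrow>\<^sub>0 nat) \<Rightarrow> nat list)"
proof (rule injI)
  fix a b :: "'v \<Rightarrow>\<^sub>0 nat" assume "phi a = phi b"
  then have "\<forall>v\<in>set (vlist :: 'v list). lk a v = lk b v" unfolding phi_def by (simp add: map_eq_conv)
  then show "a = b" by (intro poly_mapping_eqI) (simp add: set_vlist)
qed

lemma phi_eq_iff: "phi a = phi b \<longleftrightarrow> a = (b :: 'v::finite \<Rightarrow>\<^sub>0 nat)"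
  using phi_inj by (auto dest: injD)

lemma length_phi [simp]: "length (phi (m :: 'v::finite \<Rightarrow>\<^sub>0 nat)) = length (vlist :: 'v list)"
  unfolding phi_def by simp

lemma phi_nth_add: "i < length (vlist :: 'v::finite list) \<Longrightarrow> phi (a + b) ! i = phi a ! i + phi (b::'v \<Rightarrow>\<^sub>0 nat) ! i"
  unfolding phi_def by (simp add: lookup_add)

lemma phi_take_add: "take i (phi (a + c)) = take i (phi (b + c)) \<longleftrightarrow> take i (phi a) = take i (phi (b::'v::finite \<Rightarrow>\<^sub>0 nat))"
proof -
  have "take i (phi (a + c)) = take i (phi (b + c)) \<longleftrightarrow> (\<forall>j<min i (length (vlist::'v list)). phi (a + c) ! j = phi (b + c) ! j)"
    by (simp add: list_eq_iff_nth_eq) (auto simp: min_def)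
  also have "\<dots> \<longleftrightarrow> (\<forall>j<min i (length (vlist::'v list)). phi a ! j = phi b ! j)"
    by (simp add: phi_nth_add)
  also have "\<dots> \<longleftrightarrow> take i (phi a) = take i (phi b)"
    by (simp add: list_eq_iff_nth_eq) (auto simp: min_def)
  finally show ?thesis .
qed

lemma phi_less_add: "phi a < phi b \<Longrightarrow> phi (a + c) < phi (b + (c::'v::finite \<Rightarrow>\<^sub>0 nat))"
  unfolding list_less_def lexord_take_index_conv
  by (auto simp: phi_take_add phi_nth_add)

lemma phi_le_add: "phi a \<le> phi b \<Longrightarrow> phi (a + c) \<le> phi (b + (c::'v::finite \<Rightarrow>\<^sub>0 nat))"
  using phi_less_add[of a b c] by (auto simp: order_le_less phi_eq_iff)

lemma phi_wf: "wf {(a, b). phi a < phi (b::'v::finite \<Rightarrow>\<^sub>0 nat)}"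
proof -
  have "wf (inv_image (lex {(u::nat, v). u < v}) phi)"
    by (intro wf_inv_image wf_lex) (simp add: wf_less)
  moreover have "{(a, b). phi a < phi (b::'v::finite \<Rightarrow>\<^sub>0 nat)} \<subseteq> inv_image (lex {(u::nat, v). u < v}) phi"
    by (auto simp: list_less_def lexord_lex)
  ultimately show ?thesis by (rule wf_subset)
qed

definition lm :: "('v::finite, 'k::field) mpoly \<Rightarrow> ('v \<Rightarrow>\<^sub>0 nat)" where
  "lm f = inv_into (ks f) phi (Max (phi ` ks f))"

lemma lm_in: "f \<noteq> 0 \<Longrightarrow> lm f \<in> ks f"
  unfolding lm_def by (intro inv_into_into) (auto intro!: Max_in)

lemma phi_lm: "f \<noteq> 0 \<Longrightarrow> phi (lm f) = Max (phi ` ks f)"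
  unfolding lm_def by (intro f_inv_into_f) (auto intro!: Max_in)

lemma lm_max: "m \<in> ks f \<Longrightarrow> phi m \<le> phi (lm f)"
  by (subst phi_lm) auto

lemma lm_unique: "m \<in> ks f \<Longrightarrow> (\<And>m'. m' \<in> ks f \<Longrightarrow> phi m' \<le> phi m) \<Longrightarrow> lm f = m"
  by (metis antisym empty_iff keys_zero lm_in lm_max phi_eq_iff)

lemma lm_mult_uniq:
  assumes "a \<in> ks f" "b \<in> ks g" "a + b = lm f + lm g"
  shows "a = lm f \<and> b = lm g"
proof -
  have 1: "phi a \<le> phi (lm f)" "phi b \<le> phi (lm g)" using assms lm_max by auto
  have "phi a = phi (lm f)"
  proof (rule ccontr)
    assume "phi a \<noteq> phi (lm f)"
    with 1 have "phi a < phi (lm f)" by simp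
    then have "phi (a + b) < phi (lm f + b)" by (rule phi_less_add)
    also have "phi (lm f + b) \<le> phi (lm f + lm g)"
      using phi_le_add[OF 1(2), of "lm f"] by (simp add: add.commute)
    finally show False using assms(3) by simp
  qed
  then have "a = lm f" by (simp add: phi_eq_iff)
  with assms(3) show ?thesis by simp
qed

lemma lookup_mult_lm:
  fixes f g :: "('v::finite, 'k::field) mpoly"
  assumes "f \<noteq> 0" "g \<noteq> 0"
  shows "lk (f * g) (lm f + lm g) = lk f (lm f) * lk g (lm g)"
proof -
  let ?q = "lm f + lm g"
  have "lk (f * g) ?q = prod_fun (lk f) (lk g) ?q"
    by (simp add: times_poly_mapping.rep_eq)
  also have "\<dots> = (\<Sum>(a, b). lk f a * lk g b when ?q = a + b)"
    by (rule prod_fun_unfold_prod) auto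
  also have "\<dots> = (\<Sum>ab. (case ab of (a, b) \<Rightarrow> lk f a * lk g b) when (lm f, lm g) = ab)"
  proof (rule Sum_any.cong)
    fix ab :: "('v \<Rightarrow>\<^sub>0 nat) \<times> ('v \<Rightarrow>\<^sub>0 nat)"
    obtain a b where ab: "ab = (a, b)" by (cases ab)
    show "(case ab of (a, b) \<Rightarrow> lk f a * lk g b when ?q = a + b) =
        ((case ab of (a, b) \<Rightarrow> lk f a * lk g b) when (lm f, lm g) = ab)"
    proof (cases "lk f a * lk g b = 0")
      case True then show ?thesis by (simp add: ab when_def)
    next
      case False
      then have "a \<in> ks f" "b \<in> ks g" by (auto simp: in_keys_iff)
      then show ?thesis using lm_mult_uniq[of a f b g] by (auto simp: ab when_def)
    qed
  qed
  also have "\<dots> = lk f (lm f) * lk g (lm g)" by simp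
  finally show ?thesis .
qed

lemma lm_coeff_nz: "f \<noteq> 0 \<Longrightarrow> lk f (lm f) \<noteq> 0"
  using lm_in in_keys_iff by blast

lemma mult_nz: "f \<noteq> 0 \<Longrightarrow> g \<noteq> 0 \<Longrightarrow> f * (g :: ('v::finite, 'k::field) mpoly) \<noteq> 0"
  using lookup_mult_lm[of f g] lm_coeff_nz[of f] lm_coeff_nz[of g] by auto

lemma power_nz: "f \<noteq> 0 \<Longrightarrow> f ^ k \<noteq> (0 :: ('v::finite, 'k::field) mpoly)"
  by (induction k) (auto simp: mult_nz)

lemma lm_mult: "f \<noteq> 0 \<Longrightarrow> g \<noteq> 0 \<Longrightarrow> lm (f * g) = lm f + lm (g :: ('v::finite, 'k::field) mpoly)"
proof (rule lm_unique)
  assume f: "f \<noteq> 0" and g: "g \<noteq> 0"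
  show "lm f + lm g \<in> ks (f * g)"
    using lookup_mult_lm[OF f g] lm_coeff_nz[OF f] lm_coeff_nz[OF g] by (simp add: in_keys_iff)
  fix m assume "m \<in> ks (f * g)"
  then obtain a b where ab: "m = a + b" "a \<in> ks f" "b \<in> ks g" using keys_mult by blast
  have "phi (a + b) \<le> phi (lm f + b)" using phi_le_add lm_max ab by blast
  also have "\<dots> \<le> phi (lm f + lm g)"
    using phi_le_add[OF lm_max[OF ab(3)], of "lm f"] by (simp add: add.commute)
  finally show "phi m \<le> phi (lm f + lm g)" using ab by simp
qed



section \<open>Dickson's lemma\<close>

lemma nat_mono_sub: "\<exists>t::nat\<Rightarrow>nat. strict_mono t \<and> mono (\<lambda>n. (x::nat \<Rightarrow> nat) (t n))"
proof -
  obtain t where t: "strict_mono t" "monoseq (\<lambda>n. x (t n))" using seq_monosub by blast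
  show ?thesis
  proof (cases "\<forall>m. \<forall>n\<ge>m. x (t m) \<le> x (t n)")
    case True
    have "mono (\<lambda>n. x (t n))" using True by (intro monoI) blast
    then show ?thesis using t by blast
  next
    case False
    with t have dec: "\<forall>m. \<forall>n\<ge>m. x (t n) \<le> x (t m)" unfolding monoseq_def by blast
    define y where "y n = x (t n)" for n
    have "range y \<subseteq> {..y 0}" using dec by (auto simp: y_def)
    then have "finite (range y)" by (rule finite_subset) simp
    then have "Min (range y) \<in> range y" by (rule Min_in) simp
    then obtain N where N: "y N = Min (range y)" by auto
    have const: "y n = y N" if "n \<ge> N" for n
    proof -
      have "y n \<le> y N" using dec that by (simp add: y_def)
      moreover have "y N \<le> y n" unfolding N using \<open>finite (range y)\<close> by simp
      ultimately show ?thesis by simp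
    qed
    show ?thesis
    proof (intro exI conjI)
      show "strict_mono (\<lambda>n. t (N + n))" using t(1) by (auto simp: strict_mono_def)
      show "mono (\<lambda>n. x (t (N + n)))"
      proof (rule monoI)
        fix a b :: nat
        have "y (N + a) = y N" "y (N + b) = y N" using const[of "N + a"] const[of "N + b"] by simp_all
        then show "x (t (N + a)) \<le> x (t (N + b))" by (simp add: y_def)
      qed
    qed
  qed
qed

lemma dickson_aux:
  fixes m :: "nat \<Rightarrow> ('v \<Rightarrow>\<^sub>0 nat)"
  assumes "finite V"
  shows "\<exists>s::nat\<Rightarrow>nat. strict_mono s \<and> (\<forall>v\<in>V. mono (\<lambda>n. lk (m (s n)) v))"
  using assms
proof (induction V rule: finite_induct)
  case empty
  have "strict_mono (\<lambda>n::nat. n)" by (simp add: strict_mono_def)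
  then show ?case by blast
next
  case (insert v V)
  then obtain s :: "nat \<Rightarrow> nat" where s: "strict_mono s" "\<forall>w\<in>V. mono (\<lambda>n. lk (m (s n)) w)" by blast
  obtain t :: "nat \<Rightarrow> nat" where t: "strict_mono t" "mono (\<lambda>n. lk (m (s (t n))) v)"
    using nat_mono_sub[of "\<lambda>n. lk (m (s n)) v"] by blast
  have "strict_mono (\<lambda>n. s (t n))" using s(1) t(1) by (simp add: strict_mono_def)
  moreover have "mono (\<lambda>n. lk (m (s (t n))) w)" if "w \<in> V" for w
  proof (rule monoI)
    fix a b :: nat assume "a \<le> b"
    then have "t a \<le> t b" using t(1) by (simp add: strict_mono_less_eq)
    then show "lk (m (s (t a))) w \<le> lk (m (s (t b))) w" using s(2) that by (simp add: mono_def)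
  qed
  ultimately have "strict_mono (\<lambda>n. s (t n)) \<and> (\<forall>w\<in>insert v V. mono (\<lambda>n. lk (m (s (t n))) w))"
    using t(2) by blast
  then show ?case by blast
qed

definition mle :: "('v \<Rightarrow>\<^sub>0 nat) \<Rightarrow> ('v \<Rightarrow>\<^sub>0 nat) \<Rightarrow> bool" where
  "mle a b \<longleftrightarrow> (\<forall>v. lk a v \<le> lk b v)"

lemma dickson:
  fixes m :: "nat \<Rightarrow> ('v::finite \<Rightarrow>\<^sub>0 nat)"
  shows "\<exists>i j. i < j \<and> mle (m i) (m j)"
proof -
  obtain s :: "nat \<Rightarrow> nat" where s: "strict_mono s" "\<forall>v\<in>UNIV. mono (\<lambda>n. lk (m (s n)) v)"
    using dickson_aux[of "UNIV :: 'v set" m] by auto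
  have "s 0 < s 1" using s(1) by (simp add: strict_mono_def)
  moreover have "mle (m (s 0)) (m (s 1))" unfolding mle_def
  proof
    fix v show "lk (m (s 0)) v \<le> lk (m (s 1)) v" using s(2) by (simp add: mono_def)
  qed
  ultimately show ?thesis by blast
qed

lemma mle_add: "mle a b \<Longrightarrow> b = a + (b - a)"
  unfolding mle_def by (intro poly_mapping_eqI) (simp add: lookup_add lookup_minus)

section \<open>Ascending chain condition\<close>

definition LTs :: "('v::finite, 'k::field) mpoly set \<Rightarrow> ('v \<Rightarrow>\<^sub>0 nat) set" where
  "LTs A = lm ` (A - {0})"

lemma lm_single: "c \<noteq> 0 \<Longrightarrow> lm (Poly_Mapping.single a c :: ('v::finite, 'k::field) mpoly) = a"
  by (rule lm_unique) auto

lemma LT_up: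
  fixes A :: "('v::finite, 'k::field) mpoly set"
  assumes "is_ideal A" "a \<in> LTs A" "mle a b"
  shows "b \<in> LTs A"
proof -
  obtain f where f: "f \<in> A" "f \<noteq> 0" "lm f = a" using assms(2) unfolding LTs_def by auto
  define h where "h = Poly_Mapping.single (b - a) 1 * f"
  have s: "Poly_Mapping.single (b - a) (1::'k) \<noteq> 0" by (metis lookup_single_eq one_neq_zero lookup_zero)
  have "h \<in> A" unfolding h_def using ideal_multL[OF assms(1) f(1)] .
  moreover have "h \<noteq> 0" unfolding h_def using mult_nz[OF s f(2)] .
  moreover have "lm h = b" unfolding h_def
    using lm_mult[OF s f(2)] lm_single[of "1::'k" "b - a"] f(3) mle_add[OF assms(3)]
    by (simp add: add.commute)
  ultimately show ?thesis unfolding LTs_def by auto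
qed

lemma lookup_smult: "lk (Poly_Mapping.single 0 c * h) x = c * lk h x"
  by (simp add: mult_map_scale_conv_mult[symmetric] Poly_Mapping.map.rep_eq when_def)

lemma keys_smult: "ks (Poly_Mapping.single 0 c * h) \<subseteq> ks (h :: ('v::finite, 'k::field) mpoly)"
  by (auto simp: in_keys_iff lookup_smult)

lemma LT_eq_imp:
  fixes A B :: "('v::finite, 'k::field) mpoly set"
  assumes A: "is_ideal A" and B: "is_ideal B" and sub: "A \<subseteq> B" and eq: "LTs A = LTs B"
  shows "A = B"
proof -
  have main: "\<forall>f. f \<noteq> 0 \<longrightarrow> lm f = m \<longrightarrow> f \<in> B \<longrightarrow> f \<in> A" for m
  proof (induction m rule: wf_induct[OF phi_wf])
    case (1 m)
    show ?case
    proof (intro allI impI)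
      fix f assume f: "f \<noteq> 0" "lm f = m" "f \<in> B"
      then have "m \<in> LTs A" using eq unfolding LTs_def by auto
      then obtain h where h: "h \<in> A" "h \<noteq> 0" "lm h = m" unfolding LTs_def by auto
      define c where "c = lk f m / lk h m"
      define f' where "f' = f - Poly_Mapping.single 0 c * h"
      have hA: "Poly_Mapping.single 0 c * h \<in> A" using ideal_multL[OF A h(1)] .
      have f'B: "f' \<in> B" unfolding f'_def using ideal_diff[OF B f(3)] hA sub by auto
      have ff: "f = f' + Poly_Mapping.single 0 c * h" unfolding f'_def by simp
      show "f \<in> A"
      proof (cases "f' = 0")
        case True then show ?thesis using ff hA by simp
      next
        case False
        have hm: "lk h m \<noteq> 0" using lm_coeff_nz[OF h(2)] h(3) by simp
        have "lk f' m = 0" unfolding f'_def c_def using hm by (simp add: lookup_minus lookup_smult)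
        then have ne: "lm f' \<noteq> m" using lm_coeff_nz[OF False] by auto
        have "lm f' \<in> ks f' " using lm_in[OF False] .
        then have "lm f' \<in> ks f \<union> ks h"
          unfolding f'_def by (auto simp: in_keys_iff lookup_minus lookup_smult)
        then have "phi (lm f') \<le> phi m" using lm_max[of "lm f'" f] lm_max[of "lm f'" h] f(2) h(3) by auto
        with ne have "phi (lm f') < phi m" by (simp add: order_le_less phi_eq_iff)
        then have "(lm f', m) \<in> {(a, b). phi a < phi b}" by simp
        then have "f' \<in> A" using 1[rule_format, of "lm f'" f'] False f'B by blast
        then show ?thesis using ff hA ideal_add[OF A] by simp
      qed
    qed
  qed
  show ?thesis
  proof (rule antisym[OF sub], rule subsetI)
    fix f assume f: "f \<in> B"
    show "f \<in> A"
    proof (cases "f = 0")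
      case True then show ?thesis using ideal_0[OF A] by simp
    next
      case False then show ?thesis using main[of "lm f", rule_format, of f] f by blast
    qed
  qed
qed

lemma acc_monomial:
  fixes L :: "nat \<Rightarrow> ('v::finite \<Rightarrow>\<^sub>0 nat) set"
  assumes inc: "\<And>n. L n \<subseteq> L (Suc n)" and up: "\<And>n a b. a \<in> L n \<Longrightarrow> mle a b \<Longrightarrow> b \<in> L n"
  shows "\<exists>N. \<forall>n\<ge>N. L n = L N"
proof (rule ccontr)
  assume "\<not> ?thesis"
  then have ex: "\<forall>N. \<exists>n\<ge>N. L n \<noteq> L N" by blast
  define g where "g N = (SOME n. n \<ge> N \<and> L n \<noteq> L N)" for N
  have g: "g N \<ge> N \<and> L (g N) \<noteq> L N" for N
  proof -
    have "\<exists>n. n \<ge> N \<and> L n \<noteq> L N" using ex by blast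
    then show ?thesis unfolding g_def by (rule someI_ex)
  qed
  have mono: "L a \<subseteq> L b" if "a \<le> b" for a b by (rule lift_Suc_mono_le[of L a b, OF inc that])
  define ns where "ns i = (g ^^ i) 0" for i
  have ns_Suc: "ns (Suc i) = g (ns i)" for i by (simp add: ns_def)
  have ns_mono: "ns i \<le> ns j" if "i \<le> j" for i j
    using that
  proof (induction j)
    case (Suc j)
    show ?case
    proof (cases "i = Suc j")
      case False
      then have "ns i \<le> ns j" using Suc by simp
      also have "ns j \<le> ns (Suc j)" using g[of "ns j"] by (simp add: ns_Suc)
      finally show ?thesis .
    qed simp
  qed simp
  have "\<exists>x. x \<in> L (ns (Suc i)) \<and> x \<notin> L (ns i)" for i
    using g[of "ns i"] mono[of "ns i" "g (ns i)"] by (auto simp: ns_Suc)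
  then obtain m where m: "\<And>i. m i \<in> L (ns (Suc i))" "\<And>i. m i \<notin> L (ns i)" by metis
  obtain i j where ij: "i < j" "mle (m i) (m j)" using dickson[of m] by blast
  have "m i \<in> L (ns j)" using m(1)[of i] mono[OF ns_mono[of "Suc i" j]] ij(1) by auto
  then have "m j \<in> L (ns j)" using up ij(2) by blast
  then show False using m(2) by blast
qed

theorem acc:
  fixes J :: "nat \<Rightarrow> ('v::finite, 'k::field) mpoly set"
  assumes id: "\<And>n. is_ideal (J n)" and inc: "\<And>n. J n \<subseteq> J (Suc n)"
  shows "\<exists>N. \<forall>n\<ge>N. J n = J N"
proof -
  have "\<exists>N. \<forall>n\<ge>N. LTs (J n) = LTs (J N)"
  proof (rule acc_monomial)
    show "LTs (J n) \<subseteq> LTs (J (Suc n))" for n using inc unfolding LTs_def by auto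
    show "b \<in> LTs (J n)" if "a \<in> LTs (J n)" "mle a b" for n a b using LT_up id that by blast
  qed
  then obtain N where N: "\<forall>n\<ge>N. LTs (J n) = LTs (J N)" by blast
  have mono: "J a \<subseteq> J b" if "a \<le> b" for a b by (rule lift_Suc_mono_le[of J a b, OF inc that])
  show ?thesis
  proof (intro exI allI impI)
    fix n assume n: "N \<le> n"
    have "LTs (J n) = LTs (J N)" using N n by blast
    then show "J n = J N" using LT_eq_imp[OF id id mono[OF n]] by simp
  qed
qed

lemma ideal_wf:
  "wf {(J', J :: ('v::finite, 'k::field) mpoly set). is_ideal J \<and> is_ideal J' \<and> J \<subset> J'}"
proof (rule wf_iff_no_infinite_down_chain[THEN iffD2], rule notI)
  assume "\<exists>f. \<forall>i. (f (Suc i), f i) \<in> {(J', J :: ('v::finite, 'k::field) mpoly set). is_ideal J \<and> is_ideal J' \<and> J \<subset> J'}"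
  then obtain f :: "nat \<Rightarrow> ('v, 'k) mpoly set" where f0: "\<forall>i. (f (Suc i), f i) \<in> {(J', J :: ('v::finite, 'k::field) mpoly set). is_ideal J \<and> is_ideal J' \<and> J \<subset> J'}" by (rule exE)
  then have f: "\<And>i. is_ideal (f i)" "\<And>i. f i \<subset> f (Suc i)" by auto
  have "\<And>n. f n \<subseteq> f (Suc n)" using f(2) by blast
  then obtain N where N: "\<forall>n\<ge>N. f n = f N" using acc[of f, OF f(1)] by blast
  have "f (Suc N) = f N" using N[rule_format, of "Suc N"] by simp
  then show False using f(2)[of N] by simp
qed

lemma ideal_maximal:
  fixes F :: "('v::finite, 'k::field) mpoly set set"
  assumes "F \<noteq> {}" "\<And>J. J \<in> F \<Longrightarrow> is_ideal J"
  shows "\<exists>Q\<in>F. \<forall>J\<in>F. Q \<subseteq> J \<longrightarrow> J = Q"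
proof -
  obtain J0 where J0: "J0 \<in> F" using assms(1) by auto
  have "\<exists>z\<in>F. \<forall>y. (y, z) \<in> {(J', J :: ('v::finite, 'k::field) mpoly set). is_ideal J \<and> is_ideal J' \<and> J \<subset> J'} \<longrightarrow> y \<notin> F"
    by (rule wf_eq_minimal[THEN iffD1, OF ideal_wf, rule_format, OF J0])
  then obtain Q where Q: "Q \<in> F" and min: "\<And>y. (y, Q) \<in> {(J', J :: ('v::finite, 'k::field) mpoly set). is_ideal J \<and> is_ideal J' \<and> J \<subset> J'} \<Longrightarrow> y \<notin> F"
    by blast
  have "\<forall>J\<in>F. Q \<subseteq> J \<longrightarrow> J = Q"
  proof (intro ballI impI)
    fix J assume J: "J \<in> F" "Q \<subseteq> J"
    show "J = Q"
    proof (rule ccontr)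
      assume "J \<noteq> Q"
      then have "(J, Q) \<in> {(J', J :: ('v::finite, 'k::field) mpoly set). is_ideal J \<and> is_ideal J' \<and> J \<subset> J'}"
        using J Q assms(2) by auto
      then show False using min J(1) by blast
    qed
  qed
  then show ?thesis using Q by blast
qed



section \<open>Homogeneous components\<close>

definition hc :: "nat \<Rightarrow> ('v::finite, 'k::field) mpoly \<Rightarrow> ('v, 'k) mpoly" where
  "hc d f = (\<Sum>m\<in>{m\<in>ks f. mdeg m = d}. Poly_Mapping.single m (lk f m))"

lemma lookup_hc: "lk (hc d f) m = (if mdeg m = d then lk f m else 0)"
proof -
  have "lk (hc d f) m = (\<Sum>a\<in>{a\<in>ks f. mdeg a = d}. if a = m then lk f a else 0)"
    unfolding hc_def lookup_sum by (intro sum.cong) (auto simp: lookup_single when_def)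
  also have "\<dots> = (if m \<in> {a\<in>ks f. mdeg a = d} then lk f m else 0)"
    by (rule sum.delta) simp
  finally show ?thesis by (auto simp: in_keys_iff)
qed

lemma hc_add: "hc d (f + g) = hc d f + hc d g"
  by (intro poly_mapping_eqI) (simp add: lookup_hc lookup_add)

lemma hc_diff: "hc d (f - g) = hc d f - hc d g"
  by (intro poly_mapping_eqI) (simp add: lookup_hc lookup_minus)

lemma hc_0 [simp]: "hc d 0 = 0"
  by (intro poly_mapping_eqI) (simp add: lookup_hc)

lemma hc_sum: "hc d (sum F A) = (\<Sum>i\<in>A. hc d (F i))"
  by (induction A rule: infinite_finite_induct) (simp_all add: hc_add)

lemma homog_hc: "homog d (hc d f)"
  unfolding homog_def by (auto simp: in_keys_iff lookup_hc split: if_splits)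

lemma hc_homog: "homog e f \<Longrightarrow> hc d f = (if d = e then f else 0)"
  unfolding homog_def
  by (intro poly_mapping_eqI) (auto simp: lookup_hc in_keys_iff)

definition bnd :: "nat \<Rightarrow> ('v::finite, 'k::field) mpoly \<Rightarrow> bool" where
  "bnd N f \<longleftrightarrow> (\<forall>m\<in>ks f. mdeg m \<le> N)"

lemma bnd_exists: "\<exists>N. bnd N f"
  unfolding bnd_def by (rule exI[of _ "Max (mdeg ` ks f)"]) auto

lemma bnd_mono: "bnd N f \<Longrightarrow> N \<le> M \<Longrightarrow> bnd M f"
  unfolding bnd_def by auto

lemma hc_above: "bnd N f \<Longrightarrow> N < d \<Longrightarrow> hc d f = 0"
proof (intro poly_mapping_eqI)
  fix k assume "bnd N f" "N < d"
  then show "lk (hc d f) k = lk 0 k"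
    unfolding bnd_def lookup_hc by (metis in_keys_iff leD lookup_zero)
qed

lemma sum_hc: "bnd N f \<Longrightarrow> f = (\<Sum>d\<le>N. hc d f)"
proof (intro poly_mapping_eqI)
  fix m assume b: "bnd N f"
  have "lk (\<Sum>d\<le>N. hc d f) m = (\<Sum>d\<le>N. if mdeg m = d then lk f m else 0)"
    by (simp add: lookup_sum lookup_hc)
  also have "\<dots> = (if mdeg m \<in> {..N} then lk f m else 0)"
    by (rule sum.delta') simp
  also have "\<dots> = lk f m" using b unfolding bnd_def by (auto simp: in_keys_iff)
  finally show "lk f m = lk (\<Sum>d\<le>N. hc d f) m" by simp
qed

lemma hc_mult_homog_sum:
  assumes "bnd N f" "homog e u"
  shows "hc d (f * u) = (\<Sum>i\<le>N. if d = i + e then hc i f * u else 0)"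
proof -
  have "f * u = (\<Sum>i\<le>N. hc i f * u)"
    using sum_hc[OF assms(1)] by (metis sum_distrib_right)
  then have "hc d (f * u) = (\<Sum>i\<le>N. hc d (hc i f * u))" by (simp add: hc_sum)
  also have "\<dots> = (\<Sum>i\<le>N. if d = i + e then hc i f * u else 0)"
    by (intro sum.cong refl hc_homog homog_mult homog_hc assms(2))
  finally show ?thesis .
qed

lemma hc_mult_homog:
  assumes "homog e u"
  shows "hc (d + e) (f * u) = hc d f * u"
proof -
  obtain N where N: "bnd N f" using bnd_exists by blast
  have "hc (d + e) (f * u) = (\<Sum>i\<le>N. if d + e = i + e then hc i f * u else 0)"
    by (rule hc_mult_homog_sum[OF N assms])
  also have "\<dots> = (\<Sum>i\<le>N. if d = i then hc i f * u else 0)" by simp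
  also have "\<dots> = (if d \<in> {..N} then hc d f * u else 0)" by (rule sum.delta') simp
  also have "\<dots> = hc d f * u" using hc_above[OF N, of d] by auto
  finally show ?thesis .
qed

lemma hc_mult_homog_low:
  assumes "homog e u" "d < e"
  shows "hc d (f * u) = 0"
proof -
  obtain N where N: "bnd N f" using bnd_exists by blast
  show ?thesis using hc_mult_homog_sum[OF N assms(1), of d] assms(2) by simp
qed

lemma hc_mult_homog':
  assumes "homog e u"
  shows "hc d (u * f) = (if e \<le> d then u * hc (d - e) f else 0)"
proof (cases "e \<le> d")
  case True
  then have "hc d (u * f) = hc ((d - e) + e) (f * u)" by (simp add: mult.commute)
  also have "\<dots> = u * hc (d - e) f" by (simp add: hc_mult_homog[OF assms] mult.commute)
  finally show ?thesis using True by simp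
next
  case False
  then show ?thesis using hc_mult_homog_low[OF assms, of d f] by (simp add: mult.commute)
qed

lemma hc_mult_sum:
  assumes "bnd N f" "bnd M g"
  shows "hc d (f * g) = (\<Sum>i\<le>N. \<Sum>j\<le>M. if i + j = d then hc i f * hc j g else 0)"
proof -
  have "f * g = (\<Sum>i\<le>N. \<Sum>j\<le>M. hc i f * hc j g)"
    using sum_hc[OF assms(1)] sum_hc[OF assms(2)] by (metis sum_product)
  then have "hc d (f * g) = (\<Sum>i\<le>N. \<Sum>j\<le>M. hc d (hc i f * hc j g))" by (simp add: hc_sum)
  also have "\<dots> = (\<Sum>i\<le>N. \<Sum>j\<le>M. if i + j = d then hc i f * hc j g else 0)"
    by (intro sum.cong refl) (simp add: hc_homog[OF homog_mult[OF homog_hc homog_hc]] eq_commute)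
  finally show ?thesis .
qed

section \<open>Closed (homogeneous) ideals\<close>

definition hclosed :: "('v::finite, 'k::field) mpoly set \<Rightarrow> bool" where
  "hclosed J \<longleftrightarrow> (\<forall>f\<in>J. \<forall>d. hc d f \<in> J)"

lemma closedC_ideal:
  fixes G :: "('v::finite, 'k::field) mpoly set"
  assumes G: "is_ideal G"
  shows "is_ideal {f. \<forall>d. hc d f \<in> G}"
  unfolding is_ideal_def
proof (intro conjI ballI allI)
  show "0 \<in> {f. \<forall>d. hc d f \<in> G}" using ideal_0[OF G] by simp
  fix f g :: "('v, 'k) mpoly" assume "f \<in> {f. \<forall>d. hc d f \<in> G}" "g \<in> {f. \<forall>d. hc d f \<in> G}"
  then show "f + g \<in> {f. \<forall>d. hc d f \<in> G}" using ideal_add[OF G] by (simp add: hc_add)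
next
  fix f h :: "('v, 'k) mpoly" assume f: "f \<in> {f. \<forall>d. hc d f \<in> G}"
  obtain N where N: "bnd N h" using bnd_exists by blast
  have "h * f = (\<Sum>i\<le>N. hc i h * f)"
    using sum_hc[OF N] by (metis sum_distrib_right)
  then have "hc d (h * f) = (\<Sum>i\<le>N. hc d (hc i h * f))" for d by (simp add: hc_sum)
  moreover have "hc d (hc i h * f) \<in> G" for d i
    using f ideal_multL[OF G] ideal_0[OF G] by (simp add: hc_mult_homog'[OF homog_hc])
  ultimately show "h * f \<in> {f. \<forall>d. hc d f \<in> G}" by (simp add: ideal_sum[OF G])
qed

lemma closed_gen:
  assumes "\<And>h. h \<in> H \<Longrightarrow> \<exists>e. homog e h"
  shows "hclosed (ideal_gen H)"
proof -
  let ?G = "ideal_gen H"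
  have "H \<subseteq> {f. \<forall>d. hc d f \<in> ?G}"
  proof
    fix h assume h: "h \<in> H"
    then obtain e where "homog e h" using assms by blast
    then show "h \<in> {f. \<forall>d. hc d f \<in> ?G}"
      using ideal_gen_sub[of H] h ideal_0[OF ideal_gen_ideal] by (auto simp: hc_homog)
  qed
  then have "?G \<subseteq> {f. \<forall>d. hc d f \<in> ?G}"
    by (intro ideal_gen_least closedC_ideal ideal_gen_ideal)
  then show ?thesis unfolding hclosed_def by blast
qed

lemma graded_closed: "graded_ideal I \<Longrightarrow> hclosed I"
proof -
  assume "graded_ideal I"
  then have I: "I = ideal_gen {f\<in>I. \<exists>d. homog d f}" unfolding graded_ideal_def by blast
  have "hclosed (ideal_gen {f\<in>I. \<exists>d. homog d f})" by (rule closed_gen) blast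
  then show ?thesis using I by simp
qed

lemma closed_prod:
  assumes A: "hclosed A" and B: "hclosed B"
  shows "hclosed (ideal_gen {f * g |f g. f \<in> A \<and> g \<in> B})"
proof -
  let ?P = "{f * g |f g. f \<in> A \<and> g \<in> B}"
  let ?G = "ideal_gen ?P"
  have G: "is_ideal ?G" by (rule ideal_gen_ideal)
  have "?P \<subseteq> {f. \<forall>d. hc d f \<in> ?G}"
  proof
    fix x assume "x \<in> ?P"
    then obtain f g where fg: "x = f * g" "f \<in> A" "g \<in> B" by blast
    obtain N M where N: "bnd N f" and M: "bnd M g" using bnd_exists by metis
    have "hc i f * hc j g \<in> ?G" for i j
      using fg A B ideal_gen_sub[of ?P] unfolding hclosed_def by blast
    then have "hc d (f * g) \<in> ?G" for d
      unfolding hc_mult_sum[OF N M] by (auto intro!: ideal_sum[OF G] simp: ideal_0[OF G])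
    then show "x \<in> {f. \<forall>d. hc d f \<in> ?G}" using fg by simp
  qed
  then have "?G \<subseteq> {f. \<forall>d. hc d f \<in> ?G}"
    by (intro ideal_gen_least closedC_ideal G)
  then show ?thesis unfolding hclosed_def by blast
qed

lemma closed_UNIV: "hclosed UNIV" unfolding hclosed_def by simp

lemma closed_pow: "hclosed I \<Longrightarrow> hclosed (ideal_pow I k)"
  by (induction k) (simp_all add: closed_UNIV closed_prod)

lemma closed_colon:
  assumes "hclosed J" "homog e r"
  shows "hclosed (colon J r)"
  unfolding hclosed_def colon_def
proof (intro ballI allI, simp)
  fix x d assume "x * r \<in> J"
  then have "hc (d + e) (x * r) \<in> J" using assms(1) unfolding hclosed_def by blast
  then show "hc d x * r \<in> J" by (simp add: hc_mult_homog[OF assms(2)])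
qed



lemma keys_hc: "ks (hc d f) \<subseteq> ks f"
  by (auto simp: in_keys_iff lookup_hc split: if_splits)

lemma bnd_diff: "bnd N f \<Longrightarrow> ks g \<subseteq> ks f \<Longrightarrow> bnd N (f - g)"
  unfolding bnd_def by (auto simp: in_keys_iff lookup_minus) (metis in_keys_iff subsetD)

lemma keys_sum_hc: "ks (\<Sum>i\<in>A. hc i f) \<subseteq> ks f"
  using keys_sum[of "\<lambda>i. hc i f" A] keys_hc by blast

lemma hc_sum_hc: "hc i (\<Sum>j<i0. hc j f) = (if i < i0 then hc i f else 0)"
proof -
  have "hc i (\<Sum>j<i0. hc j f) = (\<Sum>j<i0. if i = j then hc j f else 0)"
    by (simp add: hc_sum hc_homog[OF homog_hc])
  also have "\<dots> = (if i \<in> {..<i0} then hc i f else 0)" by (rule sum.delta') simp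
  finally show ?thesis by simp
qed

lemma not_in_closed_hc:
  assumes Q: "is_ideal Q" and "a \<notin> Q" "bnd N a"
  shows "\<exists>i. hc i a \<notin> Q"
proof (rule ccontr)
  assume "\<not> ?thesis"
  then have "(\<Sum>d\<le>N. hc d a) \<in> Q" by (intro ideal_sum[OF Q]) blast
  then show False using sum_hc[OF assms(3)] assms(2) by simp
qed

lemma split_low:
  fixes a :: "('v::finite, 'k::field) mpoly"
  assumes Q: "is_ideal Q" and a: "a \<notin> Q" "bnd N a"
  shows "\<exists>i0 a'. a' \<in> Q \<and> hc i0 a \<notin> Q \<and> (\<forall>i<i0. hc i (a - a') = 0) \<and> hc i0 (a - a') = hc i0 a
     \<and> bnd N (a - a') \<and> i0 \<le> N"
proof -
  obtain i1 where "hc i1 a \<notin> Q" using not_in_closed_hc[OF Q a] by blast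
  define i0 where "i0 = (LEAST i. hc i a \<notin> Q)"
  have i0: "hc i0 a \<notin> Q" unfolding i0_def by (rule LeastI[of _ i1]) fact
  have low: "hc i a \<in> Q" if "i < i0" for i using not_less_Least[of i "\<lambda>i. hc i a \<notin> Q"] that i0_def by blast
  define a' where "a' = (\<Sum>j<i0. hc j a)"
  have "a' \<in> Q" unfolding a'_def using low by (intro ideal_sum[OF Q]) auto
  moreover have "hc i (a - a') = 0" if "i < i0" for i
    using that by (simp add: hc_diff a'_def hc_sum_hc)
  moreover have "hc i0 (a - a') = hc i0 a" by (simp add: hc_diff a'_def hc_sum_hc)
  moreover have "bnd N (a - a')" unfolding a'_def by (rule bnd_diff[OF a(2) keys_sum_hc])
  moreover have "i0 \<le> N"
  proof (rule ccontr)
    assume "\<not> i0 \<le> N"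
    then have "hc i0 a = 0" using hc_above[OF a(2)] by simp
    then show False using i0 ideal_0[OF Q] by simp
  qed
  ultimately show ?thesis using i0 by blast
qed

lemma homog_prime:
  fixes Q :: "('v::finite, 'k::field) mpoly set"
  assumes Q: "is_ideal Q" "hclosed Q" "Q \<noteq> UNIV"
    and hp: "\<And>a b d e. homog d a \<Longrightarrow> homog e b \<Longrightarrow> a * b \<in> Q \<Longrightarrow> a \<in> Q \<or> b \<in> Q"
  shows "prime_ideal Q"
  unfolding prime_ideal_def
proof (intro conjI allI impI Q(1) Q(3))
  fix a b assume ab: "a * b \<in> Q"
  show "a \<in> Q \<or> b \<in> Q"
  proof (rule ccontr)
    assume "\<not> ?thesis"
    then have na: "a \<notin> Q" and nb: "b \<notin> Q" by auto
    obtain N M where N: "bnd N a" and M: "bnd M b" using bnd_exists by metis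
    obtain i0 a' where a': "a' \<in> Q" "hc i0 a \<notin> Q" "\<forall>i<i0. hc i (a - a') = 0"
      "hc i0 (a - a') = hc i0 a" "bnd N (a - a')" "i0 \<le> N"
      using split_low[OF Q(1) na N] by blast
    obtain j0 b' where b': "b' \<in> Q" "hc j0 b \<notin> Q" "\<forall>j<j0. hc j (b - b') = 0"
      "hc j0 (b - b') = hc j0 b" "bnd M (b - b')" "j0 \<le> M"
      using split_low[OF Q(1) nb M] by blast
    define A where "A = a - a'"
    define B where "B = b - b'"
    have "A * B = a * b - a * b' - a' * (b - b')" unfolding A_def B_def by (simp add: algebra_simps)
    then have AB: "A * B \<in> Q"
      using ab a'(1) b'(1) ideal_diff[OF Q(1)] ideal_multL[OF Q(1)] ideal_multR[OF Q(1)] by metis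
    let ?X = "hc i0 a * hc j0 b"
    have tm: "(if i + j = i0 + j0 then hc i A * hc j B else 0) = (if i = i0 \<and> j = j0 then ?X else 0)" for i j
    proof (cases "i + j = i0 + j0")
      case True
      show ?thesis
      proof (cases "i < i0")
        case True then show ?thesis using a'(3) by (simp add: A_def)
      next
        case False
        show ?thesis
        proof (cases "i = i0")
          case True
          then show ?thesis using \<open>i + j = i0 + j0\<close> a'(4) b'(4) by (simp add: A_def B_def)
        next
          case False
          then have "j < j0" using \<open>\<not> i < i0\<close> \<open>i + j = i0 + j0\<close> by simp
          then show ?thesis using b'(3) False by (simp add: B_def)
        qed
      qed
    qed auto
    have "hc (i0 + j0) (A * B) = (\<Sum>i\<le>N. \<Sum>j\<le>M. if i + j = i0 + j0 then hc i A * hc j B else 0)"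
      by (rule hc_mult_sum) (simp_all add: A_def B_def a'(5) b'(5))
    also have "\<dots> = (\<Sum>i\<le>N. \<Sum>j\<le>M. if i = i0 \<and> j = j0 then ?X else 0)" by (simp only: tm)
    also have "\<dots> = (\<Sum>i\<le>N. if i = i0 then (\<Sum>j\<le>M. if j = j0 then ?X else 0) else 0)"
      by (intro sum.cong refl) auto
    also have "\<dots> = ?X" using a'(6) b'(6) by simp
    finally have "?X \<in> Q" using AB Q(2) unfolding hclosed_def by metis
    then show False using hp[OF homog_hc homog_hc] a'(2) b'(2) by blast
  qed
qed

lemma ass_exists:
  fixes J :: "('v::finite, 'k::field) mpoly set"
  assumes J: "is_ideal J" "hclosed J" "1 \<notin> J"
  shows "\<exists>r e. homog e r \<and> prime_ideal (colon J r)"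
proof -
  define F where "F = {colon J r | r. (\<exists>e. homog e r) \<and> r \<notin> J}"
  have "colon J 1 \<in> F" unfolding F_def using J(3) homog_one by blast
  then have "F \<noteq> {}" by blast
  moreover have "\<And>Q. Q \<in> F \<Longrightarrow> is_ideal Q" unfolding F_def using colon_ideal[OF J(1)] by blast
  ultimately obtain Q where QF: "Q \<in> F" and max: "\<And>Q'. Q' \<in> F \<Longrightarrow> Q \<subseteq> Q' \<Longrightarrow> Q' = Q"
    using ideal_maximal[of F] by blast
  then obtain r e where r: "Q = colon J r" "homog e r" "r \<notin> J" unfolding F_def by blast
  have "prime_ideal Q"
  proof (rule homog_prime)
    show "is_ideal Q" using r colon_ideal[OF J(1)] by simp
    show "hclosed Q" using r closed_colon[OF J(2)] by simp
    show "Q \<noteq> UNIV" using r(1,3) unfolding colon_def by (metis UNIV_I mem_Collect_eq mult_1)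
    fix a b d e' assume a: "homog d a" and b: "homog e' b" and ab: "a * b \<in> Q"
    show "a \<in> Q \<or> b \<in> Q"
    proof (cases "a \<in> Q")
      case False
      then have ra: "r * a \<notin> J" using r(1) unfolding colon_def by (simp add: mult.commute)
      have "homog (e + d) (r * a)" by (rule homog_mult[OF r(2) a])
      then have "colon J (r * a) \<in> F" unfolding F_def using ra by blast
      moreover have "Q \<subseteq> colon J (r * a)"
        using r(1) ideal_multR[OF J(1)] unfolding colon_def by (force simp: mult.assoc[symmetric])
      ultimately have "colon J (r * a) = Q" using max by blast
      moreover have "b \<in> colon J (r * a)"
        using ab r(1) unfolding colon_def by (simp add: ac_simps)
      ultimately show ?thesis by simp
    qed simp
  qed
  then show ?thesis using r by blast
qed



lemma ideal_zero: "is_ideal {0 :: ('v::finite, 'k::field) mpoly}"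
  unfolding is_ideal_def by simp

lemma mdeg_eq_0: "mdeg (m :: 'v::finite \<Rightarrow>\<^sub>0 nat) = 0 \<Longrightarrow> m = 0"
  unfolding mdeg_def by (intro poly_mapping_eqI) simp

lemma colon_zero: "is_ideal J \<Longrightarrow> colon J 0 = UNIV"
  unfolding colon_def using ideal_0 by auto

lemma prime_one: "prime_ideal P \<Longrightarrow> (1 :: ('v::finite, 'k::field) mpoly) \<notin> P"
  unfolding prime_ideal_def using ideal_multL[of P 1] by auto

lemma prime_power: "prime_ideal P \<Longrightarrow> x ^ k \<in> P \<Longrightarrow> (x :: ('v::finite, 'k::field) mpoly) \<in> P"
proof (induction k)
  case 0 then show ?case using prime_one by auto
next
  case (Suc k)
  then have "x \<in> P \<or> x ^ k \<in> P" unfolding prime_ideal_def by simp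
  then show ?case using Suc by blast
qed

context
  fixes I :: "('v::finite, 'k::field) mpoly set"
  assumes gr: "graded_ideal I" and nz: "I \<noteq> {0}" and np: "I \<noteq> UNIV"
begin

lemma I_ideal: "is_ideal I" using gr unfolding graded_ideal_def by blast

lemma I_gen: "I = ideal_gen {f\<in>I. \<exists>d. homog d f}" using gr unfolding graded_ideal_def by blast

lemma exists_homog: "\<exists>d f. f \<in> I \<and> f \<noteq> 0 \<and> homog d f"
proof (rule ccontr)
  assume "\<not> ?thesis"
  then have "{f\<in>I. \<exists>d. homog d f} \<subseteq> {0}" by blast
  then have "ideal_gen {f\<in>I. \<exists>d. homog d f} \<subseteq> {0}" by (rule ideal_gen_least[OF ideal_zero])
  then have "I \<subseteq> {0}" using I_gen by simp
  then show False using nz ideal_0[OF I_ideal] by blast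
qed

lemma gen_exists: "\<exists>g. g \<in> I \<and> g \<noteq> 0 \<and> homog (init_deg I) g"
proof -
  obtain d f where "f \<in> I \<and> f \<noteq> 0 \<and> homog d f" using exists_homog by blast
  then have "\<exists>f\<in>I. f \<noteq> 0 \<and> homog (init_deg I) f"
    unfolding init_deg_def by (intro LeastI[of "\<lambda>d. \<exists>f\<in>I. f \<noteq> 0 \<and> homog d f" d]) blast
  then show ?thesis by blast
qed

lemma init_le: "f \<in> I \<Longrightarrow> f \<noteq> 0 \<Longrightarrow> homog d f \<Longrightarrow> init_deg I \<le> d"
  unfolding init_deg_def by (rule Least_le) blast

lemma init_pos: "init_deg I \<ge> 1"
proof (rule ccontr)
  assume "\<not> ?thesis"
  then have a0: "init_deg I = 0" by simp
  obtain g where g: "g \<in> I" "g \<noteq> 0" "homog 0 g" using gen_exists a0 by auto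
  define c where "c = lk g 0"
  have gs: "g = Poly_Mapping.single 0 c"
  proof (rule poly_mapping_eqI)
    fix m
    show "lk g m = lk (Poly_Mapping.single 0 c) m"
    proof (cases "m = 0")
      case True then show ?thesis by (simp add: c_def)
    next
      case False
      then have "m \<notin> ks g" using g(3) mdeg_eq_0 unfolding homog_def by blast
      then show ?thesis using False by (simp add: in_keys_iff lookup_single)
    qed
  qed
  have "c \<noteq> 0" using g(2) gs by auto
  then have "Poly_Mapping.single 0 (1 / c) * g = 1" by (simp add: gs mult_single)
  then have one: "1 \<in> I" using ideal_multL[OF I_ideal g(1), of "Poly_Mapping.single 0 (1 / c)"] by simp
  have "h \<in> I" for h using ideal_multL[OF I_ideal one, of h] by simp
  then have "I = UNIV" by blast
  then show False using np by blast
qed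

lemma I_lowdeg: "f \<in> I \<Longrightarrow> lowdeg (init_deg I) f"
proof -
  have "{f\<in>I. \<exists>d. homog d f} \<subseteq> {h. lowdeg (init_deg I) h}"
  proof
    fix h assume "h \<in> {f\<in>I. \<exists>d. homog d f}"
    then obtain d where h: "h \<in> I" "homog d h" by blast
    show "h \<in> {h. lowdeg (init_deg I) h}"
    proof (cases "h = 0")
      case True then show ?thesis by (simp add: lowdeg_def)
    next
      case False then show ?thesis using h init_le[OF h(1) False h(2)]
        unfolding lowdeg_def homog_def by auto
    qed
  qed
  then have "ideal_gen {f\<in>I. \<exists>d. homog d f} \<subseteq> {h. lowdeg (init_deg I) h}" by (rule ideal_gen_least[OF lowdeg_ideal])
  then have "I \<subseteq> {h. lowdeg (init_deg I) h}" using I_gen by simp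
  then show "f \<in> I \<Longrightarrow> lowdeg (init_deg I) f" by blast
qed

lemma pow_lowdeg: "f \<in> ideal_pow I k \<Longrightarrow> lowdeg (k * init_deg I) f"
proof (induction k arbitrary: f)
  case 0 then show ?case by (simp add: lowdeg_def)
next
  case (Suc k)
  have "{f * g |f g. f \<in> I \<and> g \<in> ideal_pow I k} \<subseteq> {h. lowdeg (Suc k * init_deg I) h}"
  proof
    fix x assume "x \<in> {f * g |f g. f \<in> I \<and> g \<in> ideal_pow I k}"
    then obtain f g where fg: "x = f * g" "f \<in> I" "g \<in> ideal_pow I k" by blast
    have lf: "lowdeg (init_deg I) f" using I_lowdeg fg(2) .
    have lg: "lowdeg (k * init_deg I) g" using Suc.IH fg(3) .
    show "x \<in> {h. lowdeg (Suc k * init_deg I) h}"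
      unfolding lowdeg_def
    proof (simp, intro ballI)
      fix m assume "m \<in> ks x"
      then obtain a b where "m = a + b" "a \<in> ks f" "b \<in> ks g" using keys_mult fg(1) by blast
      then show "init_deg I + k * init_deg I \<le> mdeg m"
        using lf lg unfolding lowdeg_def by (simp add: mdeg_add add_mono)
    qed
  qed
  then have "ideal_pow I (Suc k) \<subseteq> {h. lowdeg (Suc k * init_deg I) h}"
    by (simp add: ideal_gen_least[OF lowdeg_ideal])
  then show ?case using Suc.prems by blast
qed

lemma pow_deg:
  assumes "f \<in> ideal_pow I k" "f \<noteq> 0" "homog d f"
  shows "k * init_deg I \<le> d"
proof -
  have m: "lm f \<in> ks f" using lm_in[OF assms(2)] .
  then have "k * init_deg I \<le> mdeg (lm f)" using pow_lowdeg[OF assms(1)] unfolding lowdeg_def by blast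
  moreover have "mdeg (lm f) = d" using m assms(3) unfolding homog_def by blast
  ultimately show ?thesis by simp
qed

lemma lower_bound:
  assumes k: "k \<ge> 1" and ex: "\<exists>d f. homog d f \<and> colon (ideal_pow I k) f \<in> Ass (ideal_pow I k)"
  shows "(k - 1) * init_deg I \<le> v_number (ideal_pow I k)"
proof -
  let ?J = "ideal_pow I k"
  let ?v = "v_number ?J"
  have "\<exists>f. homog ?v f \<and> colon ?J f \<in> Ass ?J"
    unfolding v_number_def by (rule LeastI_ex[OF ex])
  then obtain f where f: "homog ?v f" "prime_ideal (colon ?J f)"
    unfolding Ass_def by blast
  have fnz: "f \<noteq> 0" using f(2) colon_zero[OF ideal_pow_ideal] unfolding prime_ideal_def by auto
  obtain g where g: "g \<in> I" "g \<noteq> 0" "homog (init_deg I) g" using gen_exists by blast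
  have "g ^ k \<in> ?J" by (rule ideal_pow_power[OF g(1)])
  then have "g ^ k \<in> colon ?J f" using colon_mono_ideal[OF ideal_pow_ideal] by blast
  then have "g \<in> colon ?J f" using prime_power[OF f(2)] by blast
  then have "g * f \<in> ?J" unfolding colon_def by simp
  then have "k * init_deg I \<le> init_deg I + ?v"
    using pow_deg mult_nz[OF g(2) fnz] homog_mult[OF g(3) f(1)] by blast
  then show ?thesis using k by (simp add: algebra_simps diff_mult_distrib)
qed

lemma upper_part:
  "\<exists>N e. \<forall>n\<ge>N. (\<exists>d f. homog d f \<and> colon (ideal_pow I (Suc n)) f \<in> Ass (ideal_pow I (Suc n)))
      \<and> v_number (ideal_pow I (Suc n)) \<le> n * init_deg I + e"
proof -
  obtain g where g: "g \<in> I" "g \<noteq> 0" "homog (init_deg I) g" using gen_exists by blast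
  define C where "C n = colon (ideal_pow I (Suc n)) (g ^ n)" for n
  have Cid: "is_ideal (C n)" for n unfolding C_def by (rule colon_ideal[OF ideal_pow_ideal])
  have Cinc: "C n \<subseteq> C (Suc n)" for n
  proof
    fix x assume "x \<in> C n"
    then have "x * g ^ n \<in> ideal_pow I (Suc n)" unfolding C_def colon_def by simp
    then have "g * (x * g ^ n) \<in> ideal_pow I (Suc (Suc n))" by (rule ideal_pow_mult[OF g(1)])
    moreover have "x * g ^ Suc n = g * (x * g ^ n)" by (simp add: ac_simps)
    ultimately have "x * g ^ Suc n \<in> ideal_pow I (Suc (Suc n))" by (simp only:)
    then show "x \<in> C (Suc n)" unfolding C_def colon_def by (simp only: mem_Collect_eq)
  qed
  obtain N where N: "\<forall>n\<ge>N. C n = C N" using acc[of C, OF Cid Cinc] by blast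
  have clo: "hclosed (C N)" unfolding C_def
    by (rule closed_colon[OF closed_pow[OF graded_closed[OF gr]] homog_pow[OF g(3)]])
  have one: "1 \<notin> C N"
  proof
    assume "1 \<in> C N"
    then have "g ^ N \<in> ideal_pow I (Suc N)" unfolding C_def colon_def by simp
    then have "Suc N * init_deg I \<le> N * init_deg I"
      using pow_deg power_nz[OF g(2)] homog_pow[OF g(3)] by blast
    then show False using init_pos by simp
  qed
  obtain r e where r: "homog e r" "prime_ideal (colon (C N) r)"
    using ass_exists[OF Cid clo one] by blast
  have "(\<exists>d f. homog d f \<and> colon (ideal_pow I (Suc n)) f \<in> Ass (ideal_pow I (Suc n)))
      \<and> v_number (ideal_pow I (Suc n)) \<le> n * init_deg I + e" if n: "n \<ge> N" for n
  proof -
    have "colon (ideal_pow I (Suc n)) (g ^ n * r) = colon (C n) r"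
      unfolding C_def by (simp add: colon_colon)
    also have "\<dots> = colon (C N) r" using N[rule_format, OF n] by simp
    finally have eq: "colon (ideal_pow I (Suc n)) (g ^ n * r) = colon (C N) r" .
    have h: "homog (n * init_deg I + e) (g ^ n * r)" by (rule homog_mult[OF homog_pow[OF g(3)] r(1)])
    have A: "colon (ideal_pow I (Suc n)) (g ^ n * r) \<in> Ass (ideal_pow I (Suc n))"
      unfolding Ass_def using eq r(2) by (simp only: mem_Collect_eq) blast
    have "v_number (ideal_pow I (Suc n)) \<le> n * init_deg I + e"
      unfolding v_number_def by (rule Least_le) (use h A in blast)
    then show ?thesis using h A by blast
  qed
  then show ?thesis by blast
qed

lemma bounds:
  "\<exists>N e. \<forall>n\<ge>N. n * init_deg I \<le> v_number (ideal_pow I (Suc n))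
      \<and> v_number (ideal_pow I (Suc n)) \<le> n * init_deg I + e"
proof -
  obtain N e where Ne: "\<forall>n\<ge>N. (\<exists>d f. homog d f \<and> colon (ideal_pow I (Suc n)) f \<in> Ass (ideal_pow I (Suc n)))
      \<and> v_number (ideal_pow I (Suc n)) \<le> n * init_deg I + e" using upper_part by blast
  have "n * init_deg I \<le> v_number (ideal_pow I (Suc n))" if "n \<ge> N" for n
  proof -
    have "\<exists>d f. homog d f \<and> colon (ideal_pow I (Suc n)) f \<in> Ass (ideal_pow I (Suc n))"
      using Ne that by blast
    then have "(Suc n - 1) * init_deg I \<le> v_number (ideal_pow I (Suc n))"
      by (intro lower_bound) simp_all
    then show ?thesis by simp
  qed
  then show ?thesis using Ne by blast
qed

lemma main_limit:
  "(\<lambda>k. real (v_number (ideal_pow I k)) / real k) \<longlonglongrightarrow> real (init_deg I)"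
proof -
  obtain N e where Ne: "\<And>n. n \<ge> N \<Longrightarrow> n * init_deg I \<le> v_number (ideal_pow I (Suc n))
      \<and> v_number (ideal_pow I (Suc n)) \<le> n * init_deg I + e" using bounds by blast
  define a where "a = real (init_deg I)"
  define u where "u k = real (v_number (ideal_pow I k)) / real k" for k
  have ev1: "eventually (\<lambda>k. a - a / real k \<le> u k) sequentially"
    unfolding eventually_sequentially
  proof (intro exI allI impI)
    fix k assume k: "Suc N \<le> k"
    then obtain n where kn: "k = Suc n" and n: "n \<ge> N" by (metis Suc_le_D Suc_le_mono)
    have "n * init_deg I \<le> v_number (ideal_pow I k)" using Ne[OF n] kn by blast
    then have "real (n * init_deg I) \<le> real (v_number (ideal_pow I k))" by (rule of_nat_mono)
    then have "real n * a \<le> real (v_number (ideal_pow I k))" by (simp add: a_def)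
    moreover have "a - a / real k = real n * a / real k" using kn by (simp add: field_simps)
    ultimately show "a - a / real k \<le> u k" unfolding u_def by (simp add: divide_right_mono)
  qed
  have ev2: "eventually (\<lambda>k. u k \<le> a - a / real k + real e / real k) sequentially"
    unfolding eventually_sequentially
  proof (intro exI allI impI)
    fix k assume k: "Suc N \<le> k"
    then obtain n where kn: "k = Suc n" and n: "n \<ge> N" by (metis Suc_le_D Suc_le_mono)
    have "v_number (ideal_pow I k) \<le> n * init_deg I + e" using Ne[OF n] kn by blast
    then have "real (v_number (ideal_pow I k)) \<le> real (n * init_deg I + e)" by (rule of_nat_mono)
    then have "real (v_number (ideal_pow I k)) \<le> real n * a + real e" by (simp add: a_def)
    moreover have "a - a / real k = real n * a / real k" using kn by (simp add: field_simps)
    then have "a - a / real k + real e / real k = (real n * a + real e) / real k" by (simp add: add_divide_distrib)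
    ultimately show "u k \<le> a - a / real k + real e / real k" unfolding u_def by (simp add: divide_right_mono)
  qed
  have l1: "(\<lambda>k. a - a / real k) \<longlonglongrightarrow> a"
    using tendsto_diff[OF tendsto_const lim_const_over_n[of a]] by simp
  have l2: "(\<lambda>k. a - a / real k + real e / real k) \<longlonglongrightarrow> a"
    using tendsto_add[OF l1 lim_const_over_n[of "real e"]] by simp
  have "u \<longlonglongrightarrow> a" by (rule tendsto_sandwich[OF ev1 ev2 l1 l2])
  then show ?thesis unfolding u_def a_def .
qed

end


theorem theorem4p1:
  fixes I :: "('v::finite, 'k::field) mpoly set"
  assumes "graded_ideal I" and "I \<noteq> {0}" and "I \<noteq> UNIV"
  shows "(\<lambda>k. real (v_number (ideal_pow I k)) / real k) \<longlonglongrightarrow> real (init_deg I)"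
  using main_limit[OF assms] .

end
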